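(* Let $\varphi:\Lambda\to\Gamma$ be a regular covering map of finite simplicial graphs with $\Gamma$ and $\Lambda$ connected. Let $v$ be a vertex of $\Gamma$, $B$ a connected component of $\Gamma\setminus\mathrm{st}(v)$, $\tilde B$ a connected component of $\varphi^{-1}(B)$, and $D=\bigcap_{u\in\varphi^{-1}(v)}C(u,\tilde B)$. Then either $\varphi^{-1}(B)\subseteq D$, or $C(u,\tilde B)=D$ for a vertex $u\in\varphi^{-1}(v)$ whose star is adjacent to $\tilde B$.
   Context: Graphs are finite simplicial graphs; subgraphs are induced. $\mathrm{st}(u)$ is the subgraph induced by $u$ and its neighbours. A covering map $\varphi:\Lambda\to\Gamma$ is a surjective simplicial map mapping the neighbours of each vertex $u$ bijectively onto the neighbours of $\varphi(u)$; regular means the group of graph automorphisms $\mu$ of $\Lambda$ with $\varphi\mu=\varphi$ acts transitively on each fiber. For a vertex $u$ of $\Lambda$ and a connected subgraph $A$ of $\Lambda$ disjoint from $\mathrm{st}(u)$, $C(u,A)$ denotes the component of $\Lambda\setminus\mathrm{st}(u)$ containing $A$. Two disjoint subgraphs are adjacent if some edge has one endpoint in each. *)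

theory Defs
  imports Main
begin

definition sgraph :: "'a set \<Rightarrow> ('a \<Rightarrow> 'a \<Rightarrow> bool) \<Rightarrow> bool" where
  "sgraph V E \<longleftrightarrow> finite V \<and> (\<forall>x y. E x y \<longrightarrow> x \<in> V \<and> y \<in> V)
     \<and> (\<forall>x y. E x y \<longrightarrow> E y x) \<and> (\<forall>x. \<not> E x x)"

definition nbrs :: "'a set \<Rightarrow> ('a \<Rightarrow> 'a \<Rightarrow> bool) \<Rightarrow> 'a \<Rightarrow> 'a set" where
  "nbrs V E u = {w \<in> V. E u w}"

text \<open>Vertex set of st(u): u together with its neighbours (the subgraph is induced).\<close>
definition star :: "'a set \<Rightarrow> ('a \<Rightarrow> 'a \<Rightarrow> bool) \<Rightarrow> 'a \<Rightarrow> 'a set" where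
  "star V E u = insert u (nbrs V E u)"

definition connected_in :: "('a \<Rightarrow> 'a \<Rightarrow> bool) \<Rightarrow> 'a set \<Rightarrow> bool" where
  "connected_in E S \<longleftrightarrow> S \<noteq> {} \<and>
     (\<forall>x\<in>S. \<forall>y\<in>S. (x, y) \<in> {(a, b). a \<in> S \<and> b \<in> S \<and> E a b}\<^sup>*)"

definition component_of :: "('a \<Rightarrow> 'a \<Rightarrow> bool) \<Rightarrow> 'a set \<Rightarrow> 'a set \<Rightarrow> bool" where
  "component_of E S C \<longleftrightarrow> C \<subseteq> S \<and> connected_in E C \<and>
     (\<forall>C'. C \<subseteq> C' \<and> C' \<subseteq> S \<and> connected_in E C' \<longrightarrow> C' = C)"

definition Ccomp :: "'a set \<Rightarrow> ('a \<Rightarrow> 'a \<Rightarrow> bool) \<Rightarrow> 'a \<Rightarrow> 'a set \<Rightarrow> 'a set" where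
  "Ccomp V E u A = (THE C. component_of E (V - star V E u) C \<and> A \<subseteq> C)"

definition adjacent_sets :: "('a \<Rightarrow> 'a \<Rightarrow> bool) \<Rightarrow> 'a set \<Rightarrow> 'a set \<Rightarrow> bool" where
  "adjacent_sets E X Y \<longleftrightarrow> X \<inter> Y = {} \<and> (\<exists>x\<in>X. \<exists>y\<in>Y. E x y)"

definition covering_map ::
  "'a set \<Rightarrow> ('a \<Rightarrow> 'a \<Rightarrow> bool) \<Rightarrow> 'b set \<Rightarrow> ('b \<Rightarrow> 'b \<Rightarrow> bool) \<Rightarrow> ('a \<Rightarrow> 'b) \<Rightarrow> bool" where
  "covering_map VL EL VG EG \<phi> \<longleftrightarrow>
     \<phi> ` VL = VG \<and> (\<forall>x y. EL x y \<longrightarrow> EG (\<phi> x) (\<phi> y)) \<and>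
     (\<forall>u\<in>VL. bij_betw \<phi> (nbrs VL EL u) (nbrs VG EG (\<phi> u)))"

definition deck_transformation ::
  "'a set \<Rightarrow> ('a \<Rightarrow> 'a \<Rightarrow> bool) \<Rightarrow> ('a \<Rightarrow> 'b) \<Rightarrow> ('a \<Rightarrow> 'a) \<Rightarrow> bool" where
  "deck_transformation VL EL \<phi> \<mu> \<longleftrightarrow>
     bij_betw \<mu> VL VL \<and> (\<forall>x\<in>VL. \<forall>y\<in>VL. EL x y \<longleftrightarrow> EL (\<mu> x) (\<mu> y)) \<and>
     (\<forall>x\<in>VL. \<phi> (\<mu> x) = \<phi> x)"

definition regular_covering ::
  "'a set \<Rightarrow> ('a \<Rightarrow> 'a \<Rightarrow> bool) \<Rightarrow> 'b set \<Rightarrow> ('b \<Rightarrow> 'b \<Rightarrow> bool) \<Rightarrow> ('a \<Rightarrow> 'b) \<Rightarrow> bool" where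
  "regular_covering VL EL VG EG \<phi> \<longleftrightarrow> covering_map VL EL VG EG \<phi> \<and>
     (\<forall>x\<in>VL. \<forall>y\<in>VL. \<phi> x = \<phi> y \<longrightarrow>
        (\<exists>\<mu>. deck_transformation VL EL \<phi> \<mu> \<and> \<mu> x = y))"

end

theory Submission
  imports Defs
begin
definition relS :: "('a \<Rightarrow> 'a \<Rightarrow> bool) \<Rightarrow> 'a set \<Rightarrow> ('a \<times> 'a) set" where
  "relS E S = {(a, b). a \<in> S \<and> b \<in> S \<and> E a b}"

definition cmp :: "('a \<Rightarrow> 'a \<Rightarrow> bool) \<Rightarrow> 'a set \<Rightarrow> 'a \<Rightarrow> 'a set" where
  "cmp E S x = {y. (x, y) \<in> (relS E S)\<^sup>*}"

lemma connected_in_alt: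
  "connected_in E S \<longleftrightarrow> S \<noteq> {} \<and> (\<forall>x\<in>S. \<forall>y\<in>S. (x, y) \<in> (relS E S)\<^sup>*)"
  unfolding connected_in_def relS_def by simp

lemma relS_mono: "A \<subseteq> B \<Longrightarrow> relS E A \<subseteq> relS E B"
  unfolding relS_def by auto

lemma rtr_mono: "(x,y) \<in> (relS E A)\<^sup>* \<Longrightarrow> A \<subseteq> B \<Longrightarrow> (x,y) \<in> (relS E B)\<^sup>*"
  using rtrancl_mono[OF relS_mono] by (metis subsetD)

lemma relS_sym:
  assumes "\<forall>x y. E x y \<longrightarrow> E y x" and "(x,y) \<in> (relS E S)\<^sup>*"
  shows "(y,x) \<in> (relS E S)\<^sup>*"
proof -
  have "sym (relS E S)" unfolding sym_def relS_def using assms(1) by auto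
  then have "sym ((relS E S)\<^sup>*)" by (rule sym_rtrancl)
  then show ?thesis using assms(2) unfolding sym_def by blast
qed

lemma rtr_in: "(x,y) \<in> (relS E S)\<^sup>* \<Longrightarrow> x \<in> S \<Longrightarrow> y \<in> S"
  by (induction rule: rtrancl_induct) (auto simp: relS_def)

lemma cmp_sub: "x \<in> S \<Longrightarrow> cmp E S x \<subseteq> S"
proof
  fix y assume "x \<in> S" "y \<in> cmp E S x"
  then show "y \<in> S" unfolding cmp_def using rtr_in[of x y E S] by simp
qed

lemma cmp_self: "x \<in> cmp E S x" unfolding cmp_def by simp

lemma cmp_eq:
  assumes sym: "\<forall>x y. E x y \<longrightarrow> E y x" and "y \<in> cmp E S x"
  shows "cmp E S y = cmp E S x"
proof -
  have 1: "(x,y) \<in> (relS E S)\<^sup>*" using assms(2) unfolding cmp_def by simp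
  have 2: "(y,x) \<in> (relS E S)\<^sup>*" using relS_sym[OF sym 1] .
  show ?thesis unfolding cmp_def using 1 2 by (auto intro: rtrancl_trans)
qed

lemma cmp_disj:
  assumes sym: "\<forall>x y. E x y \<longrightarrow> E y x" and "cmp E S x \<noteq> cmp E S y"
  shows "cmp E S x \<inter> cmp E S y = {}"
  using cmp_eq[OF sym] assms(2) by (metis disjoint_iff)

lemma conn_root:
  assumes sym: "\<forall>x y. E x y \<longrightarrow> E y x" and "a \<in> A" and "\<forall>x\<in>A. (a,x) \<in> (relS E A)\<^sup>*"
  shows "connected_in E A"
  unfolding connected_in_alt
proof (intro conjI ballI)
  show "A \<noteq> {}" using assms(2) by blast
  fix x y assume "x \<in> A" "y \<in> A"
  then have "(a,x) \<in> (relS E A)\<^sup>*" "(a,y) \<in> (relS E A)\<^sup>*" using assms(3) by auto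
  then show "(x, y) \<in> (relS E A)\<^sup>*" using relS_sym[OF sym] by (meson rtrancl_trans)
qed

lemma cmp_path:
  "(x,y) \<in> (relS E S)\<^sup>* \<Longrightarrow> (x,y) \<in> (relS E (cmp E S x))\<^sup>*"
proof (induction rule: rtrancl_induct)
  case base then show ?case by simp
next
  case (step y z)
  have "y \<in> cmp E S x" using step(1) unfolding cmp_def by simp
  moreover have "z \<in> cmp E S x" using step(1,2) unfolding cmp_def by simp
  moreover have "E y z" using step(2) unfolding relS_def by simp
  ultimately have "(y,z) \<in> relS E (cmp E S x)" unfolding relS_def by simp
  then show ?case using step(3) by simp
qed

lemma cmp_connected:
  assumes sym: "\<forall>x y. E x y \<longrightarrow> E y x"
  shows "connected_in E (cmp E S x)"
proof (rule conn_root[OF sym cmp_self], rule ballI)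
  fix y assume "y \<in> cmp E S x"
  then have "(x,y) \<in> (relS E S)\<^sup>*" unfolding cmp_def by simp
  then show "(x, y) \<in> (relS E (cmp E S x))\<^sup>*" by (rule cmp_path)
qed

lemma conn_sub_cmp:
  assumes "connected_in E A" "A \<subseteq> S" "a \<in> A" shows "A \<subseteq> cmp E S a"
proof
  fix y assume "y \<in> A"
  then have "(a,y) \<in> (relS E A)\<^sup>*" using assms(1,3) unfolding connected_in_alt by simp
  then have "(a,y) \<in> (relS E S)\<^sup>*" using assms(2) by (rule rtr_mono)
  then show "y \<in> cmp E S a" unfolding cmp_def by simp
qed

lemma cmp_component:
  assumes sym: "\<forall>x y. E x y \<longrightarrow> E y x" and "x \<in> S"
  shows "component_of E S (cmp E S x)"
  unfolding component_of_def
proof (intro conjI allI impI)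
  show "cmp E S x \<subseteq> S" using cmp_sub[OF assms(2)] .
  show "connected_in E (cmp E S x)" using cmp_connected[OF sym] .
  fix C' assume h: "cmp E S x \<subseteq> C' \<and> C' \<subseteq> S \<and> connected_in E C'"
  have "x \<in> C'" using h cmp_self[of x E S] by (elim conjE) (rule subsetD)
  then have "C' \<subseteq> cmp E S x" using h conn_sub_cmp[of E C' S x] by (elim conjE) simp
  then show "C' = cmp E S x" using h by (elim conjE) (rule subset_antisym)
qed

lemma component_cmp:
  assumes sym: "\<forall>x y. E x y \<longrightarrow> E y x" and "component_of E S C" and "x \<in> C"
  shows "C = cmp E S x"
proof -
  have C: "C \<subseteq> S" "connected_in E C"
    and max: "\<And>C'. C \<subseteq> C' \<Longrightarrow> C' \<subseteq> S \<Longrightarrow> connected_in E C' \<Longrightarrow> C' = C"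
    using assms(2) unfolding component_of_def by auto
  have "C \<subseteq> cmp E S x" using conn_sub_cmp[OF C(2) C(1) assms(3)] .
  have "x \<in> S" using C(1) assms(3) by (rule subsetD)
  then have "cmp E S x \<subseteq> S" by (rule cmp_sub)
  from max[OF \<open>C \<subseteq> cmp E S x\<close> this cmp_connected[OF sym]] show ?thesis by (rule HOL.sym)
qed

lemma Ccomp_eq:
  assumes sym: "\<forall>x y. E x y \<longrightarrow> E y x" and "connected_in E A"
    and "A \<subseteq> V - star V E u" and "a \<in> A"
  shows "Ccomp V E u A = cmp E (V - star V E u) a"
  unfolding Ccomp_def
proof (rule the_equality)
  show "component_of E (V - star V E u) (cmp E (V - star V E u) a) \<and> A \<subseteq> cmp E (V - star V E u) a"
  proof
    have "a \<in> V - star V E u" using assms(3,4) by (rule subsetD)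
    then show "component_of E (V - star V E u) (cmp E (V - star V E u) a)"
      by (rule cmp_component[OF sym])
    show "A \<subseteq> cmp E (V - star V E u) a" using conn_sub_cmp[OF assms(2-4)] .
  qed
  fix C assume h: "component_of E (V - star V E u) C \<and> A \<subseteq> C"
  then have aC: "a \<in> C" using assms(4) by auto
  have "component_of E (V - star V E u) C" using h by simp
  from component_cmp[OF sym this aC] show "C = cmp E (V - star V E u) a" .
qed

lemma exit_edge:
  assumes "(a,y) \<in> (relS E C')\<^sup>*" and "a \<in> C" and "y \<notin> C"
  shows "\<exists>c\<in>C. \<exists>z\<in>C'. z \<notin> C \<and> E c z"
proof -
  have "y \<in> C \<or> (\<exists>c\<in>C. \<exists>z\<in>C'. z \<notin> C \<and> E c z)"
    using assms(1)
  proof (induction rule: rtrancl_induct)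
    case base then show ?case using assms(2) by simp
  next
    case (step y z)
    have yz: "z \<in> C'" "E y z" using step(2) unfolding relS_def by auto
    show ?case
    proof (cases "z \<in> C")
      case False
      show ?thesis
      proof (cases "y \<in> C")
        case True
        then show ?thesis using False yz by (intro disjI2 bexI[of _ y] bexI[of _ z]) auto
      next
        case False
        then show ?thesis using step(3) by simp
      qed
    qed simp
  qed
  then show ?thesis using assms(3) by blast
qed

lemma conn_union:
  assumes sym: "\<forall>x y. E x y \<longrightarrow> E y x" and "connected_in E A" "connected_in E B"
    and "a \<in> A" "b \<in> B" "E a b"
  shows "connected_in E (A \<union> B)"
proof (rule conn_root[OF sym, where a=a])
  show "a \<in> A \<union> B" using assms(4) by simp
  have ab: "(a,b) \<in> relS E (A \<union> B)" using assms(4-6) unfolding relS_def by simp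
  show "\<forall>x\<in>A \<union> B. (a, x) \<in> (relS E (A \<union> B))\<^sup>*"
  proof
    fix x assume "x \<in> A \<union> B"
    then show "(a, x) \<in> (relS E (A \<union> B))\<^sup>*"
    proof
      assume "x \<in> A"
      then have "(a,x) \<in> (relS E A)\<^sup>*" using assms(2,4) unfolding connected_in_alt by simp
      then show ?thesis by (rule rtr_mono) simp
    next
      assume "x \<in> B"
      then have "(b,x) \<in> (relS E B)\<^sup>*" using assms(3,5) unfolding connected_in_alt by simp
      then have "(b,x) \<in> (relS E (A \<union> B))\<^sup>*" by (rule rtr_mono) simp
      with ab show ?thesis by (rule converse_rtrancl_into_rtrancl)
    qed
  qed
qed

lemma conn_single: "connected_in E {y}"
  unfolding connected_in_alt by simp

lemma conn_image:
  assumes sym: "\<forall>x y. E x y \<longrightarrow> E y x" and "connected_in E A"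
    and pres: "\<forall>x\<in>A. \<forall>y\<in>A. E x y \<longrightarrow> E (f x) (f y)"
  shows "connected_in E (f ` A)"
proof -
  obtain a where a: "a \<in> A" using assms(2) unfolding connected_in_alt by blast
  have "(f a, f x) \<in> (relS E (f ` A))\<^sup>*" if "(a,x) \<in> (relS E A)\<^sup>*" for x
    using that
  proof (induction rule: rtrancl_induct)
    case base then show ?case by simp
  next
    case (step y z)
    then have "(f y, f z) \<in> relS E (f ` A)" using pres unfolding relS_def by auto
    then show ?case using step(3) by simp
  qed
  then show ?thesis
  proof (intro conn_root[OF sym, where a="f a"])
    show "f a \<in> f ` A" using a by simp
    fix P assume h: "\<And>x. (a, x) \<in> (relS E A)\<^sup>* \<Longrightarrow> (f a, f x) \<in> (relS E (f ` A))\<^sup>*"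
    show "\<forall>x\<in>f ` A. (f a, x) \<in> (relS E (f ` A))\<^sup>*"
    proof
      fix y assume "y \<in> f ` A"
      then obtain x where x: "x \<in> A" "y = f x" by blast
      have "(a, x) \<in> (relS E A)\<^sup>*" using assms(2) a x(1) unfolding connected_in_alt by simp
      then show "(f a, y) \<in> (relS E (f ` A))\<^sup>*" using h x(2) by simp
    qed
  qed
qed

lemma star_conn:
  assumes "sgraph V E" and "u \<in> V"
  shows "connected_in E (star V E u)"
proof -
  have sym: "\<forall>x y. E x y \<longrightarrow> E y x" using assms(1) unfolding sgraph_def by blast
  show ?thesis
  proof (rule conn_root[OF sym, where a=u])
    show "u \<in> star V E u" unfolding star_def by simp
    show "\<forall>x\<in>star V E u. (u, x) \<in> (relS E (star V E u))\<^sup>*"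
    proof
      fix x assume x: "x \<in> star V E u"
      show "(u, x) \<in> (relS E (star V E u))\<^sup>*"
      proof (cases "x = u")
        case False
        then have "(u,x) \<in> relS E (star V E u)" using x unfolding relS_def star_def nbrs_def by auto
        then show ?thesis by simp
      qed simp
    qed
  qed
qed

lemma star_sub: "u \<in> V \<Longrightarrow> star V E u \<subseteq> V"
  unfolding star_def nbrs_def by auto

lemma deck_star:
  assumes "deck_transformation VL EL \<phi> \<mu>" and "u \<in> VL"
  shows "\<mu> ` star VL EL u = star VL EL (\<mu> u)"
proof -
  have bij: "bij_betw \<mu> VL VL" and ed: "\<And>x y. x \<in> VL \<Longrightarrow> y \<in> VL \<Longrightarrow> EL x y \<longleftrightarrow> EL (\<mu> x) (\<mu> y)"
    using assms(1) unfolding deck_transformation_def by auto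
  have im: "\<mu> ` VL = VL" using bij by (simp add: bij_betw_def)
  have "\<mu> ` {w \<in> VL. EL u w} = {w' \<in> VL. EL (\<mu> u) w'}"
  proof
    show "\<mu> ` {w \<in> VL. EL u w} \<subseteq> {w' \<in> VL. EL (\<mu> u) w'}"
    proof
      fix x assume "x \<in> \<mu> ` {w \<in> VL. EL u w}"
      then obtain w where w: "w \<in> VL" "EL u w" "x = \<mu> w" by blast
      have "EL (\<mu> u) (\<mu> w)" using ed[OF assms(2) w(1)] w(2) by blast
      moreover have "\<mu> w \<in> VL" using im w(1) by blast
      ultimately show "x \<in> {w' \<in> VL. EL (\<mu> u) w'}" using w(3) by blast
    qed
    show "{w' \<in> VL. EL (\<mu> u) w'} \<subseteq> \<mu> ` {w \<in> VL. EL u w}"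
    proof
      fix w' assume "w' \<in> {w' \<in> VL. EL (\<mu> u) w'}"
      then have "w' \<in> \<mu> ` VL" "EL (\<mu> u) w'" using im by auto
      then obtain w where w: "w \<in> VL" "w' = \<mu> w" "EL (\<mu> u) w'" by blast
      then have "EL u w" using ed[OF assms(2) w(1)] by blast
      then show "w' \<in> \<mu> ` {w \<in> VL. EL u w}" using w by blast
    qed
  qed
  then show ?thesis unfolding star_def nbrs_def by simp
qed

lemma deck_cmp:
  assumes "deck_transformation VL EL \<phi> \<mu>" and "S \<subseteq> VL" and "a \<in> S"
  shows "\<mu> ` cmp EL S a = cmp EL (\<mu> ` S) (\<mu> a)"
proof -
  have bij: "bij_betw \<mu> VL VL" and ed: "\<And>x y. x \<in> VL \<Longrightarrow> y \<in> VL \<Longrightarrow> EL x y \<longleftrightarrow> EL (\<mu> x) (\<mu> y)"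
    using assms(1) unfolding deck_transformation_def by auto
  have inj: "inj_on \<mu> VL" using bij by (simp add: bij_betw_def)
  show ?thesis
  proof
    show "\<mu> ` cmp EL S a \<subseteq> cmp EL (\<mu> ` S) (\<mu> a)"
    proof
      fix y' assume "y' \<in> \<mu> ` cmp EL S a"
      then obtain y where y: "(a,y) \<in> (relS EL S)\<^sup>*" "y' = \<mu> y" unfolding cmp_def by auto
      have "(\<mu> a, \<mu> y) \<in> (relS EL (\<mu> ` S))\<^sup>*" using y(1)
      proof (induction rule: rtrancl_induct)
        case base then show ?case by simp
      next
        case (step y z)
        then have yz: "y \<in> S" "z \<in> S" "EL y z" unfolding relS_def by auto
        then have "EL (\<mu> y) (\<mu> z)" using ed assms(2) by blast
        then have "(\<mu> y, \<mu> z) \<in> relS EL (\<mu> ` S)" using yz unfolding relS_def by auto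
        then show ?case using step(3) by simp
      qed
      then show "y' \<in> cmp EL (\<mu> ` S) (\<mu> a)" using y(2) unfolding cmp_def by simp
    qed
    show "cmp EL (\<mu> ` S) (\<mu> a) \<subseteq> \<mu> ` cmp EL S a"
    proof
      fix y' assume "y' \<in> cmp EL (\<mu> ` S) (\<mu> a)"
      then have "(\<mu> a, y') \<in> (relS EL (\<mu> ` S))\<^sup>*" unfolding cmp_def by simp
      then show "y' \<in> \<mu> ` cmp EL S a"
      proof (induction rule: rtrancl_induct)
        case base then show ?case using cmp_self[of a EL S] by blast
      next
        case (step y' z')
        then obtain y where y: "y \<in> cmp EL S a" "y' = \<mu> y" by blast
        have yS: "y \<in> S" using y(1) cmp_sub[OF assms(3)] by blast
        from step(2) obtain z where z: "z \<in> S" "z' = \<mu> z" "EL y' z'"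
          unfolding relS_def by auto
        have "EL y z" using z y yS ed assms(2) by blast
        then have "(y,z) \<in> relS EL S" using yS z(1) unfolding relS_def by simp
        then have "z \<in> cmp EL S a" using y(1) unfolding cmp_def by simp
        then show ?case using z(2) by blast
      qed
    qed
  qed
qed

theorem lemma3p7:
  fixes VL :: "'a set" and EL :: "'a \<Rightarrow> 'a \<Rightarrow> bool"
    and VG :: "'b set" and EG :: "'b \<Rightarrow> 'b \<Rightarrow> bool"
    and \<phi> :: "'a \<Rightarrow> 'b" and v :: 'b and B :: "'b set" and Bt :: "'a set"
  assumes "sgraph VL EL" and "sgraph VG EG"
    and "connected_in EL VL" and "connected_in EG VG"
    and "regular_covering VL EL VG EG \<phi>"
    and "v \<in> VG"
    and "component_of EG (VG - star VG EG v) B"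
    and "component_of EL {x \<in> VL. \<phi> x \<in> B} Bt"
  defines "D \<equiv> (\<Inter>u\<in>{x \<in> VL. \<phi> x = v}. Ccomp VL EL u Bt)"
  shows "{x \<in> VL. \<phi> x \<in> B} \<subseteq> D \<or>
         (\<exists>u\<in>{x \<in> VL. \<phi> x = v}. adjacent_sets EL (star VL EL u) Bt \<and> Ccomp VL EL u Bt = D)"
proof -
  have finL: "finite VL" and symL: "\<forall>x y. EL x y \<longrightarrow> EL y x"
    using assms(1) unfolding sgraph_def by auto
  have symG: "\<forall>x y. EG x y \<longrightarrow> EG y x" and irrG: "\<forall>x. \<not> EG x x"
    using assms(2) unfolding sgraph_def by auto
  have cov: "\<phi> ` VL = VG" and hom: "\<forall>x y. EL x y \<longrightarrow> EG (\<phi> x) (\<phi> y)"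
    and nb: "\<forall>u\<in>VL. bij_betw \<phi> (nbrs VL EL u) (nbrs VG EG (\<phi> u))"
    and reg: "\<forall>x\<in>VL. \<forall>y\<in>VL. \<phi> x = \<phi> y \<longrightarrow> (\<exists>\<mu>. deck_transformation VL EL \<phi> \<mu> \<and> \<mu> x = y)"
    using assms(5) unfolding regular_covering_def covering_map_def by auto
  have nbim: "\<phi> ` nbrs VL EL u = nbrs VG EG (\<phi> u)" if "u \<in> VL" for u
    using bij_betw_imp_surj_on[OF nb[rule_format, OF that]] .
  have nbinj: "inj_on \<phi> (nbrs VL EL u)" if "u \<in> VL" for u
    using nb[rule_format, OF that] unfolding bij_betw_def by simp
  have Bcomp: "B \<subseteq> VG - star VG EG v" "connected_in EG B"
    and Bmax: "\<And>C'. B \<subseteq> C' \<Longrightarrow> C' \<subseteq> VG - star VG EG v \<Longrightarrow> connected_in EG C' \<Longrightarrow> C' = B"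
    using assms(7) unfolding component_of_def by auto
  define P where "P = {x \<in> VL. \<phi> x \<in> B}"
  define F where "F = {x \<in> VL. \<phi> x = v}"
  have Btc: "Bt \<subseteq> P" "connected_in EL Bt"
    and Btmax: "\<And>C'. Bt \<subseteq> C' \<Longrightarrow> C' \<subseteq> P \<Longrightarrow> connected_in EL C' \<Longrightarrow> C' = Bt"
    using assms(8) unfolding component_of_def P_def by auto
  have BtVL: "Bt \<subseteq> VL" using Btc(1) unfolding P_def by auto
  obtain b0 where b0: "b0 \<in> Bt" using Btc(2) unfolding connected_in_alt by auto
  have b0P: "b0 \<in> P" using b0 Btc(1) by auto

  have starP: "star VL EL u \<inter> P = {}" if "u \<in> F" for u
  proof -
    have uVL: "u \<in> VL" and uv: "\<phi> u = v" using that unfolding F_def by auto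
    have False if x: "x \<in> star VL EL u" "x \<in> P" for x
    proof -
      have "\<phi> x \<in> star VG EG v"
      proof (cases "x = u")
        case True then show ?thesis using uv unfolding star_def by simp
      next
        case False
        then have "x \<in> nbrs VL EL u" using x(1) unfolding star_def by simp
        then have "\<phi> x \<in> nbrs VG EG (\<phi> u)" using nbim[OF uVL] by blast
        then show "\<phi> x \<in> star VG EG v" using uv unfolding star_def by simp
      qed
      moreover have "\<phi> x \<in> B" using x(2) unfolding P_def by simp
      ultimately show False using Bcomp(1) by auto
    qed
    then show ?thesis by auto
  qed

  have stardisj: "star VL EL u \<inter> star VL EL w = {}" if "u \<in> F" "w \<in> F" "u \<noteq> w" for u w
  proof (rule ccontr)
    assume "star VL EL u \<inter> star VL EL w \<noteq> {}"
    then obtain z where z: "z \<in> star VL EL u" "z \<in> star VL EL w" by blast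
    have uw: "u \<in> VL" "w \<in> VL" "\<phi> u = v" "\<phi> w = v" using that unfolding F_def by auto
    show False
    proof (cases "z = u")
      case True
      then have "EL w u" using z(2) \<open>u \<noteq> w\<close> unfolding star_def nbrs_def by auto
      then have "EG (\<phi> w) (\<phi> u)" using hom by simp
      then show False using uw irrG by simp
    next
      case zu: False
      then have ez: "EL u z" "z \<in> VL" using z(1) unfolding star_def nbrs_def by auto
      show False
      proof (cases "z = w")
        case True
        then have "EG (\<phi> u) (\<phi> w)" using hom ez by simp
        then show False using uw irrG by simp
      next
        case False
        then have "EL w z" using z(2) unfolding star_def nbrs_def by auto
        then have "u \<in> nbrs VL EL z" "w \<in> nbrs VL EL z" using ez symL uw unfolding nbrs_def by auto
        then have "u = w" using nbinj[OF ez(2)] uw unfolding inj_on_def by auto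
        then show False using that by simp
      qed
    qed
  qed

  have BtSu: "Bt \<subseteq> VL - star VL EL u" if "u \<in> F" for u
    using starP[OF that] Btc(1) BtVL by auto
  have Ccomp_Bt: "Ccomp VL EL u Bt = cmp EL (VL - star VL EL u) b0" if "u \<in> F" for u
    by (rule Ccomp_eq[OF symL Btc(2) BtSu[OF that] b0])

  have NB: "\<exists>u\<in>F. y \<in> star VL EL u" if "b \<in> Bt" "y \<in> VL" "y \<notin> Bt" "EL b y" for b y
  proof -
    have "y \<notin> P"
    proof
      assume "y \<in> P"
      have "connected_in EL (Bt \<union> {y})"
        by (rule conn_union[OF symL Btc(2) conn_single that(1) singletonI that(4)])
      then have "Bt \<union> {y} = Bt" using Btmax[of "Bt \<union> {y}"] Btc(1) \<open>y \<in> P\<close> by auto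
      then show False using that(3) by auto
    qed
    have "\<phi> y \<notin> B" using \<open>y \<notin> P\<close> that(2) unfolding P_def by auto
    have "\<phi> b \<in> B" using that(1) Btc(1) unfolding P_def by auto
    have e: "EG (\<phi> b) (\<phi> y)" using hom that(4) by simp
    have "\<phi> y \<in> VG" using cov that(2) by auto
    have "\<phi> y \<in> star VG EG v"
    proof (rule ccontr)
      assume "\<phi> y \<notin> star VG EG v"
      then have "B \<union> {\<phi> y} \<subseteq> VG - star VG EG v" using Bcomp(1) \<open>\<phi> y \<in> VG\<close> by auto
      moreover have "connected_in EG (B \<union> {\<phi> y})"
        by (rule conn_union[OF symG Bcomp(2) conn_single \<open>\<phi> b \<in> B\<close> singletonI e])
      ultimately have "B \<union> {\<phi> y} = B" using Bmax by auto
      then show False using \<open>\<phi> y \<notin> B\<close> by auto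
    qed
    show ?thesis
    proof (cases "\<phi> y = v")
      case True
      then have "y \<in> F" using that(2) unfolding F_def by simp
      moreover have "y \<in> star VL EL y" unfolding star_def by simp
      ultimately show ?thesis by blast
    next
      case False
      then have "EG v (\<phi> y)" using \<open>\<phi> y \<in> star VG EG v\<close> unfolding star_def nbrs_def by auto
      then have "v \<in> nbrs VG EG (\<phi> y)" using symG assms(6) unfolding nbrs_def by auto
      then have "v \<in> \<phi> ` nbrs VL EL y" using nbim[OF that(2)] by simp
      then obtain u where u: "u \<in> nbrs VL EL y" "v = \<phi> u" by (rule imageE)
      then have "u \<in> F" "y \<in> star VL EL u" using symL that(2) unfolding F_def nbrs_def star_def by auto
      then show ?thesis by blast
    qed
  qed

  define U where "U = {u \<in> F. adjacent_sets EL (star VL EL u) Bt}"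
  have adj: "u \<in> U" if "u \<in> F" "s \<in> star VL EL u" "c \<in> Bt" "EL s c" for u s c
  proof -
    have "star VL EL u \<inter> Bt = {}" using starP[OF that(1)] Btc(1) by auto
    then show ?thesis using that unfolding U_def adjacent_sets_def by blast
  qed

  obtain u0 where u0: "u0 \<in> U"
  proof -
    have "v \<in> \<phi> ` VL" using cov assms(6) by simp
    then obtain f where f: "f \<in> VL" "v = \<phi> f" by (rule imageE)
    then have fF: "f \<in> F" unfolding F_def by simp
    have "f \<in> star VL EL f" unfolding star_def by simp
    then have "f \<notin> Bt" using starP[OF fF] Btc(1) by auto
    have "(b0, f) \<in> (relS EL VL)\<^sup>*" using assms(3) b0 BtVL f(1) unfolding connected_in_alt by auto
    from exit_edge[OF this b0 \<open>f \<notin> Bt\<close>] obtain c z where cz: "c \<in> Bt" "z \<in> VL" "z \<notin> Bt" "EL c z"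
      by blast
    from NB[OF cz] obtain u where u: "u \<in> F" "z \<in> star VL EL u" by blast
    have "EL z c" using symL cz(4) by simp
    then have "u \<in> U" using adj[OF u cz(1)] by simp
    then show ?thesis using that by blast
  qed
  have u0F: "u0 \<in> F" and u0adj: "adjacent_sets EL (star VL EL u0) Bt" using u0 unfolding U_def by auto

  show ?thesis
  proof (cases "\<forall>u\<in>U. u = u0")
    case True
    have BtC: "cmp EL (VL - star VL EL u0) b0 = Bt"
    proof
      show "Bt \<subseteq> cmp EL (VL - star VL EL u0) b0" by (rule conn_sub_cmp[OF Btc(2) BtSu[OF u0F] b0])
      show "cmp EL (VL - star VL EL u0) b0 \<subseteq> Bt"
      proof
        fix y assume y: "y \<in> cmp EL (VL - star VL EL u0) b0"
        show "y \<in> Bt"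
        proof (rule ccontr)
          assume "y \<notin> Bt"
          have "(b0, y) \<in> (relS EL (VL - star VL EL u0))\<^sup>*" using y unfolding cmp_def by simp
          from exit_edge[OF this b0 \<open>y \<notin> Bt\<close>] obtain c z where
            cz: "c \<in> Bt" "z \<in> VL - star VL EL u0" "z \<notin> Bt" "EL c z" by blast
          have "z \<in> VL" using cz(2) by simp
          from NB[OF cz(1) this cz(3,4)] obtain u where u: "u \<in> F" "z \<in> star VL EL u" by blast
          have "EL z c" using symL cz(4) by simp
          then have "u \<in> U" using adj[OF u cz(1)] by simp
          then have "u = u0" using True by simp
          then show False using u(2) cz(2) by simp
        qed
      qed
    qed
    have CD: "Ccomp VL EL u0 Bt = D"
    proof
      show "D \<subseteq> Ccomp VL EL u0 Bt" unfolding D_def using u0F unfolding F_def by auto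
      have C0: "Ccomp VL EL u0 Bt = Bt" using Ccomp_Bt[OF u0F] BtC by simp
      have "Bt \<subseteq> Ccomp VL EL u Bt" if "u \<in> F" for u
        using Ccomp_Bt[OF that] conn_sub_cmp[OF Btc(2) BtSu[OF that] b0] by simp
      then show "Ccomp VL EL u0 Bt \<subseteq> D" unfolding D_def C0 F_def by auto
    qed
    show ?thesis using u0F u0adj CD unfolding F_def by auto
  next
    case False
    then obtain u1 where u1: "u1 \<in> U" "u1 \<noteq> u0" by blast
    have lift: "\<exists>t\<in>Bt. \<phi> t = \<phi> y" if "y \<in> P" for y
    proof -
      have L: "z \<in> \<phi> ` Bt" if "(\<phi> b0, z) \<in> (relS EG B)\<^sup>*" for z
        using that
      proof (induction rule: rtrancl_induct)
        case base then show ?case using b0 by simp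
      next
        case (step z z')
        from step(3) obtain t where t: "t \<in> Bt" "z = \<phi> t" by blast
        have tVL: "t \<in> VL" using t(1) BtVL by auto
        have zz: "z' \<in> B" "EG z z'" using step(2) unfolding relS_def by auto
        have "z' \<in> VG" using zz(1) Bcomp(1) by auto
        then have "z' \<in> nbrs VG EG (\<phi> t)" using zz(2) t(2) unfolding nbrs_def by simp
        then have "z' \<in> \<phi> ` nbrs VL EL t" using nbim[OF tVL] by simp
        then obtain t' where t': "t' \<in> nbrs VL EL t" "z' = \<phi> t'" by (rule imageE)
        have t'1: "t' \<in> VL" "EL t t'" using t'(1) unfolding nbrs_def by auto
        then have "t' \<in> P" using zz(1) t'(2) unfolding P_def by simp
        have "connected_in EL (Bt \<union> {t'})"
          by (rule conn_union[OF symL Btc(2) conn_single t(1) singletonI t'1(2)])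
        then have "Bt \<union> {t'} = Bt" using Btmax[of "Bt \<union> {t'}"] Btc(1) \<open>t' \<in> P\<close> by auto
        then have "t' \<in> Bt" by auto
        then show ?case using t'(2) by blast
      qed
      have "\<phi> b0 \<in> B" "\<phi> y \<in> B" using b0P that unfolding P_def by auto
      then have "(\<phi> b0, \<phi> y) \<in> (relS EG B)\<^sup>*" using Bcomp(2) unfolding connected_in_alt by simp
      from L[OF this] show ?thesis by auto
    qed

    have key: "\<exists>T w. connected_in EL T \<and> T \<subseteq> P \<and> y \<in> T \<and> w \<in> F \<and> w \<noteq> u \<and>
                 (\<exists>s\<in>star VL EL w. \<exists>t\<in>T. EL s t)" if yP: "y \<in> P" and uF: "u \<in> F" for y u
    proof -
      obtain t where t: "t \<in> Bt" "\<phi> t = \<phi> y" using lift[OF yP] by blast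
      have tVL: "t \<in> VL" and yVL: "y \<in> VL" using t(1) BtVL yP unfolding P_def by auto
      obtain \<mu> where \<mu>: "deck_transformation VL EL \<phi> \<mu>" "\<mu> t = y"
        using reg[rule_format, OF tVL yVL t(2)] by blast
      have bij: "bij_betw \<mu> VL VL"
        and ed: "\<And>x y. x \<in> VL \<Longrightarrow> y \<in> VL \<Longrightarrow> EL x y \<longleftrightarrow> EL (\<mu> x) (\<mu> y)"
        and ph: "\<And>x. x \<in> VL \<Longrightarrow> \<phi> (\<mu> x) = \<phi> x"
        using \<mu>(1) unfolding deck_transformation_def by auto
      have inj: "inj_on \<mu> VL" and im: "\<mu> ` VL = VL" using bij unfolding bij_betw_def by auto
      have pres: "\<forall>x\<in>Bt. \<forall>y\<in>Bt. EL x y \<longrightarrow> EL (\<mu> x) (\<mu> y)"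
      proof (intro ballI impI)
        fix x y assume "x \<in> Bt" "y \<in> Bt" "EL x y"
        then show "EL (\<mu> x) (\<mu> y)" using ed[of x y] BtVL by auto
      qed
      have Tc: "connected_in EL (\<mu> ` Bt)" by (rule conn_image[OF symL Btc(2) pres])
      have TP: "\<mu> ` Bt \<subseteq> P"
      proof
        fix x assume "x \<in> \<mu> ` Bt"
        then obtain b where b: "b \<in> Bt" "x = \<mu> b" by blast
        have "b \<in> VL" using b(1) BtVL by auto
        then have "\<mu> b \<in> VL" "\<phi> (\<mu> b) = \<phi> b" using im ph by auto
        then show "x \<in> P" using b Btc(1) unfolding P_def by auto
      qed
      have yT: "y \<in> \<mu> ` Bt" using t(1) \<mu>(2) by blast
      have adjw: "\<mu> x \<in> F \<and> (\<exists>s\<in>star VL EL (\<mu> x). \<exists>t\<in>\<mu> ` Bt. EL s t)" if "x \<in> U" for x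
      proof -
        have xF: "x \<in> F" and "adjacent_sets EL (star VL EL x) Bt" using that unfolding U_def by auto
        then obtain s c where sc: "s \<in> star VL EL x" "c \<in> Bt" "EL s c" unfolding adjacent_sets_def by blast
        have xVL: "x \<in> VL" "\<phi> x = v" using xF unfolding F_def by auto
        have sVL: "s \<in> VL" using star_sub[OF xVL(1)] sc(1) by auto
        have cVL: "c \<in> VL" using sc(2) BtVL by auto
        have "\<mu> x \<in> VL" "\<phi> (\<mu> x) = v" using im ph xVL by auto
        then have "\<mu> x \<in> F" unfolding F_def by simp
        moreover have "\<mu> s \<in> star VL EL (\<mu> x)" using deck_star[OF \<mu>(1) xVL(1)] sc(1) by blast
        moreover have "EL (\<mu> s) (\<mu> c)" using ed[OF sVL cVL] sc(3) by simp
        ultimately show ?thesis using sc(2) by blast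
      qed
      have u01: "\<mu> u1 \<noteq> \<mu> u0"
      proof
        assume "\<mu> u1 = \<mu> u0"
        moreover have "u1 \<in> VL" "u0 \<in> VL" using u1(1) u0 unfolding U_def F_def by auto
        ultimately have "u1 = u0" using inj unfolding inj_on_def by blast
        then show False using u1(2) by simp
      qed
      show ?thesis
      proof (cases "\<mu> u1 = u")
        case False
        then show ?thesis using adjw[OF u1(1)] Tc TP yT by blast
      next
        case True
        then have "\<mu> u0 \<noteq> u" using u01 by simp
        then show ?thesis using adjw[OF u0] Tc TP yT by blast
      qed
    qed

    have claim: False
      if uF: "u \<in> F" and aP: "a \<in> P" and cP: "c \<in> P" and
        "cmp EL (VL - star VL EL u) a \<noteq> cmp EL (VL - star VL EL u) c"
        and "card (cmp EL (VL - star VL EL u) a) \<le> card (cmp EL (VL - star VL EL u) c)" for u a c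
    proof -
      define S where "S = VL - star VL EL u"
      define K where "K = cmp EL S a"
      define K2 where "K2 = cmp EL S c"
      have uVL: "u \<in> VL" "\<phi> u = v" using that(1) unfolding F_def by auto
      have aS: "a \<in> S" and cS: "c \<in> S" using starP[OF that(1)] that(2,3) unfolding P_def S_def by auto
      have KS: "K \<subseteq> S" "K2 \<subseteq> S" using cmp_sub[OF aS] cmp_sub[OF cS] unfolding K_def K2_def by auto
      have SVL: "S \<subseteq> VL" unfolding S_def by auto
      have KK2: "K \<noteq> K2" "card K \<le> card K2" using that(4,5) unfolding K_def K2_def S_def by auto
      obtain T w where Tw: "connected_in EL T" "T \<subseteq> P" "a \<in> T" "w \<in> F" "w \<noteq> u"
        and stT: "\<exists>s\<in>star VL EL w. \<exists>t\<in>T. EL s t"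
        using key[OF aP uF] by blast
      obtain s t where st: "s \<in> star VL EL w" "t \<in> T" "EL s t" using stT by blast
      have wVL: "w \<in> VL" "\<phi> w = v" using Tw(4) unfolding F_def by auto
      have dj: "star VL EL u \<inter> star VL EL w = {}" using stardisj[OF that(1) Tw(4)] Tw(5) by auto
      have TS: "T \<subseteq> S" using Tw(2) starP[OF that(1)] unfolding P_def S_def by auto
      have swS: "star VL EL w \<subseteq> S" using star_sub[OF wVL(1)] dj unfolding S_def by auto
      have "connected_in EL (star VL EL w \<union> T)"
        by (rule conn_union[OF symL star_conn[OF assms(1) wVL(1)] Tw(1) st])
      moreover have "star VL EL w \<union> T \<subseteq> S" using swS TS by auto
      moreover have "a \<in> star VL EL w \<union> T" using Tw(3) by auto
      ultimately have "star VL EL w \<union> T \<subseteq> cmp EL S a" by (rule conn_sub_cmp)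
      then have swK: "star VL EL w \<subseteq> K" unfolding K_def by auto
      have "\<phi> u = \<phi> w" using uVL wVL by simp
      then obtain \<mu> where \<mu>: "deck_transformation VL EL \<phi> \<mu>" "\<mu> u = w"
        using reg[rule_format, OF uVL(1) wVL(1)] by blast
      have bij: "bij_betw \<mu> VL VL" using \<mu>(1) unfolding deck_transformation_def by auto
      have inj: "inj_on \<mu> VL" and im: "\<mu> ` VL = VL" using bij unfolding bij_betw_def by auto
      define Sw where "Sw = VL - star VL EL w"
      have muS: "\<mu> ` S = Sw"
      proof -
        have "\<mu> ` S = \<mu> ` VL - \<mu> ` star VL EL u"
          unfolding S_def by (rule inj_on_image_set_diff[OF inj]) (use star_sub[OF uVL(1)] in auto)
        also have "\<dots> = Sw" unfolding Sw_def im deck_star[OF \<mu>(1) uVL(1)] \<mu>(2) by simp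
        finally show ?thesis .
      qed
      have muK: "\<mu> ` K = cmp EL Sw (\<mu> a)" using deck_cmp[OF \<mu>(1) SVL aS] muS unfolding K_def by simp
      have muK2: "\<mu> ` K2 = cmp EL Sw (\<mu> c)" using deck_cmp[OF \<mu>(1) SVL cS] muS unfolding K2_def by simp
      have uSu: "u \<in> star VL EL u" unfolding star_def by simp
      have suSw: "star VL EL u \<subseteq> Sw" using star_sub[OF uVL(1)] dj unfolding Sw_def by auto
      define K' where "K' = cmp EL Sw u"
      have suK': "star VL EL u \<subseteq> K'"
        unfolding K'_def by (rule conn_sub_cmp[OF star_conn[OF assms(1) uVL(1)] suSw uSu])
      have out: "z \<in> K'" if "z \<in> Sw" "z \<notin> K" for z
      proof (cases "z \<in> star VL EL u")
        case True
        then show ?thesis using suK' by auto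
      next
        case False
        then have zS: "z \<in> S" using that(1) unfolding Sw_def S_def by auto
        define R where "R = cmp EL S z"
        have "cmp EL S z \<noteq> cmp EL S a" using cmp_self[of z EL S] that(2) unfolding K_def by auto
        then have RK: "R \<inter> K = {}" using cmp_disj[OF symL] unfolding R_def K_def by blast
        have RS: "R \<subseteq> S" using cmp_sub[OF zS] unfolding R_def by simp
        have zR: "z \<in> R" unfolding R_def by (rule cmp_self)
        have uR: "u \<notin> R" using RS uSu unfolding S_def by auto
        have "(z, u) \<in> (relS EL VL)\<^sup>*" using assms(3) zS uVL(1) unfolding S_def connected_in_alt by auto
        from exit_edge[OF this zR uR] obtain r y where ry: "r \<in> R" "y \<in> VL" "y \<notin> R" "EL r y"
          by blast
        have ysu: "y \<in> star VL EL u"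
        proof (rule ccontr)
          assume "y \<notin> star VL EL u"
          then have "y \<in> S" using ry(2) unfolding S_def by simp
          then have "(r, y) \<in> relS EL S" using ry(1,4) RS unfolding relS_def by auto
          moreover have "(z, r) \<in> (relS EL S)\<^sup>*" using ry(1) unfolding R_def cmp_def by simp
          ultimately have "(z, y) \<in> (relS EL S)\<^sup>*" by (rule rtrancl_into_rtrancl[rotated])
          then have "y \<in> R" unfolding R_def cmp_def by simp
          then show False using ry(3) by simp
        qed
        have Rc: "connected_in EL R" unfolding R_def by (rule cmp_connected[OF symL])
        have "connected_in EL (R \<union> star VL EL u)"
          by (rule conn_union[OF symL Rc star_conn[OF assms(1) uVL(1)] ry(1) ysu ry(4)])
        moreover have "R \<union> star VL EL u \<subseteq> Sw"
        proof -
          have "R \<inter> star VL EL w = {}" using RK swK by auto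
          then have "R \<subseteq> Sw" using RS SVL unfolding Sw_def by auto
          then show ?thesis using suSw by auto
        qed
        moreover have "u \<in> R \<union> star VL EL u" using uSu by simp
        ultimately have "R \<union> star VL EL u \<subseteq> cmp EL Sw u" by (rule conn_sub_cmp)
        then show ?thesis using zR unfolding K'_def by auto
      qed
      have KVL: "K \<subseteq> VL" "K2 \<subseteq> VL" using KS SVL by auto
      have finK: "finite K" by (rule finite_subset[OF KVL(1) finL])
      have wK: "w \<in> K" using swK unfolding star_def by auto
      have small: "card X < card K" if "X = cmp EL Sw e" "e \<in> Sw" "X \<noteq> K'" for X e
      proof -
        have "cmp EL Sw e \<noteq> cmp EL Sw u" using that unfolding K'_def by simp
        then have XK': "X \<inter> K' = {}" using cmp_disj[OF symL] that(1) unfolding K'_def by blast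
        have XSw: "X \<subseteq> Sw" using cmp_sub[OF that(2)] that(1) by simp
        have XK: "X \<subseteq> K - star VL EL w"
        proof
          fix z assume "z \<in> X"
          then have "z \<in> Sw" "z \<notin> K'" using XSw XK' by auto
          then have "z \<in> K" using out by blast
          moreover have "z \<notin> star VL EL w" using \<open>z \<in> Sw\<close> unfolding Sw_def by simp
          ultimately show "z \<in> K - star VL EL w" by simp
        qed
        have "K - star VL EL w \<subset> K" using wK unfolding star_def by auto
        then have "card (K - star VL EL w) < card K" by (rule psubset_card_mono[OF finK])
        moreover have "card X \<le> card (K - star VL EL w)" using XK finK by (simp add: card_mono)
        ultimately show ?thesis by simp
      qed
      have cK: "card (\<mu> ` K) = card K" by (rule card_image[OF inj_on_subset[OF inj KVL(1)]])
      have cK2: "card (\<mu> ` K2) = card K2" by (rule card_image[OF inj_on_subset[OF inj KVL(2)]])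
      have ne: "\<mu> ` K \<noteq> \<mu> ` K2" using inj_on_image_eq_iff[OF inj KVL] KK2(1) by simp
      have muaS: "\<mu> a \<in> Sw" "\<mu> c \<in> Sw" using muS aS cS by auto
      show False
      proof (cases "\<mu> ` K = K'")
        case True
        then have "\<mu> ` K2 \<noteq> K'" using ne by simp
        from small[OF muK2 muaS(2) this] cK2 KK2(2) show False by simp
      next
        case False
        from small[OF muK muaS(1) False] cK show False by simp
      qed
    qed

    have "P \<subseteq> D"
    proof
      fix x assume x: "x \<in> P"
      show "x \<in> D" unfolding D_def
      proof (rule INT_I)
        fix u assume u: "u \<in> {x \<in> VL. \<phi> x = v}"
        then have uF: "u \<in> F" unfolding F_def by simp
        have "x \<in> cmp EL (VL - star VL EL u) b0"
        proof (rule ccontr)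
          assume nx: "x \<notin> cmp EL (VL - star VL EL u) b0"
          have ne: "cmp EL (VL - star VL EL u) x \<noteq> cmp EL (VL - star VL EL u) b0"
            using nx cmp_self[of x EL "VL - star VL EL u"] by auto
          show False
          proof (cases "card (cmp EL (VL - star VL EL u) x) \<le> card (cmp EL (VL - star VL EL u) b0)")
            case True
            show False by (rule claim[OF uF x b0P ne True])
          next
            case False
            then have le: "card (cmp EL (VL - star VL EL u) b0) \<le> card (cmp EL (VL - star VL EL u) x)"
              by simp
            show False by (rule claim[OF uF b0P x not_sym[OF ne] le])
          qed
        qed
        then show "x \<in> Ccomp VL EL u Bt" using Ccomp_Bt[OF uF] by simp
      qed
    qed
    then show ?thesis unfolding P_def by simp
  qed
qed

end
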